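(* Let $W\in\mathbb{D}_n$ with $\mathcal{E}=\{1,\dots,m\}$ and $|\mathcal{I}|=k\ge1$, $m+k=n$, satisfying the Ground Assumption. Let $W'\in\mathbb{D}_{m+1}$ be a Dale matrix with excitatory set $\{1,\dots,m\}$ and inhibitory set $\{m+1\}$, such that $W'_{ij}=W_{ij}$ for $i,j\in\mathcal{E}$; for all $i\in\mathcal{E}$, $W'_{i(m+1)}<0$ if and only if the $i$-th row of the submatrix $W_{\mathcal{E}\mathcal{I}}$ (rows $\mathcal{E}$, columns $\mathcal{I}$) is nonzero; and the $(m+1)$-st row of $W'$ is zero. Assume $W'$ satisfies the Ground Assumption. Then $\mathcal{C}(W)=\mathcal{C}(W')$.
   Context: Threshold-linear network: $\dot x_i=-x_i+[\sum_j W_{ij}x_j+b_i]_+$ with $[y]_+=\max(0,y)$; a fixed point is $x^*$ with $x^*=[Wx^*+b]_+$. A Dale matrix $W\in\mathbb{D}_n$ is an $n\times n$ real matrix with a partition $[n]=\mathcal{E}\sqcup\mathcal{I}$ such that $W_{ii}=0$, columns indexed by $\mathcal{E}$ are nonnegative and columns indexed by $\mathcal{I}$ are nonpositive. Ground Assumption: $(I-W)_\sigma$ is nonsingular for every nonempty $\sigma\subset[n]$. Excitatory support: $\mathrm{supp}_+x=\{i\in\mathcal{E}:x_i>0\}$. Combinatorial code: $\mathcal{C}(W)=\{\mathrm{supp}_+x^*: b\in\mathbb{R}^n_{\ge0},\ x^*\in\mathbb{R}^n_{\ge0}\text{ a fixed point of }(W,b)\}$. *)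

theory Defs
  imports Complex_Main "HOL-Combinatorics.Permutations"
begin

text \<open>Matrices are functions nat => nat => real; the index set is [n] = {1..n}.
  Vectors are functions nat => real, only their values on {1..n} matter.\<close>

definition det_on :: "nat set \<Rightarrow> (nat \<Rightarrow> nat \<Rightarrow> real) \<Rightarrow> real" where
  "det_on S A = (\<Sum>p\<in>{p. p permutes S}. of_int (sign p) * (\<Prod>i\<in>S. A i (p i)))"

definition dale_matrix :: "nat \<Rightarrow> nat set \<Rightarrow> (nat \<Rightarrow> nat \<Rightarrow> real) \<Rightarrow> bool" where
  "dale_matrix n E W \<longleftrightarrow> E \<subseteq> {1..n} \<and>
     (\<forall>i\<in>{1..n}. W i i = 0) \<and>
     (\<forall>i\<in>{1..n}. \<forall>j\<in>{1..n}. (j \<in> E \<longrightarrow> W i j \<ge> 0) \<and> (j \<notin> E \<longrightarrow> W i j \<le> 0))"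

definition ground_assumption :: "nat \<Rightarrow> (nat \<Rightarrow> nat \<Rightarrow> real) \<Rightarrow> bool" where
  "ground_assumption n W \<longleftrightarrow>
     (\<forall>\<sigma>. \<sigma> \<noteq> {} \<and> \<sigma> \<subseteq> {1..n} \<longrightarrow>
        det_on \<sigma> (\<lambda>i j. (if i = j then 1 else 0) - W i j) \<noteq> 0)"

definition tln_fixed_point :: "nat \<Rightarrow> (nat \<Rightarrow> nat \<Rightarrow> real) \<Rightarrow> (nat \<Rightarrow> real) \<Rightarrow> (nat \<Rightarrow> real) \<Rightarrow> bool" where
  "tln_fixed_point n W b x \<longleftrightarrow>
     (\<forall>i\<in>{1..n}. x i = max 0 ((\<Sum>j\<in>{1..n}. W i j * x j) + b i))"

definition supp_plus :: "nat set \<Rightarrow> (nat \<Rightarrow> real) \<Rightarrow> nat set" where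
  "supp_plus E x = {i \<in> E. x i > 0}"

definition comb_code :: "nat \<Rightarrow> nat set \<Rightarrow> (nat \<Rightarrow> nat \<Rightarrow> real) \<Rightarrow> nat set set" where
  "comb_code n E W = {supp_plus E x | x b.
      (\<forall>i\<in>{1..n}. b i \<ge> 0) \<and> (\<forall>i\<in>{1..n}. x i \<ge> 0) \<and> tln_fixed_point n W b x}"

end

theory Submission
  imports Defs
begin

lemma code_char:
  "comb_code n E W = {supp_plus E x | x. (\<forall>i\<in>{1..n}. x i \<ge> 0) \<and>
      (\<forall>i\<in>{1..n}. (\<Sum>j\<in>{1..n}. W i j * x j) \<le> x i)}"
proof (intro set_eqI iffI)
  fix s assume "s \<in> comb_code n E W"
  then obtain x b where s: "s = supp_plus E x" and b: "\<forall>i\<in>{1..n}. b i \<ge> 0"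
    and x0: "\<forall>i\<in>{1..n}. x i \<ge> 0" and fp: "tln_fixed_point n W b x"
    unfolding comb_code_def by blast
  have "\<forall>i\<in>{1..n}. (\<Sum>j\<in>{1..n}. W i j * x j) \<le> x i"
  proof
    fix i assume i: "i \<in> {1..n}"
    have "x i = max 0 ((\<Sum>j\<in>{1..n}. W i j * x j) + b i)" using fp i
      unfolding tln_fixed_point_def by blast
    moreover have "b i \<ge> 0" using b i by blast
    ultimately show "(\<Sum>j\<in>{1..n}. W i j * x j) \<le> x i" by linarith
  qed
  then show "s \<in> {supp_plus E x | x. (\<forall>i\<in>{1..n}. x i \<ge> 0) \<and>
      (\<forall>i\<in>{1..n}. (\<Sum>j\<in>{1..n}. W i j * x j) \<le> x i)}" using s x0 by blast
next
  fix s assume "s \<in> {supp_plus E x | x. (\<forall>i\<in>{1..n}. x i \<ge> 0) \<and>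
      (\<forall>i\<in>{1..n}. (\<Sum>j\<in>{1..n}. W i j * x j) \<le> x i)}"
  then obtain x where s: "s = supp_plus E x" and x0: "\<forall>i\<in>{1..n}. x i \<ge> 0"
    and h: "\<forall>i\<in>{1..n}. (\<Sum>j\<in>{1..n}. W i j * x j) \<le> x i" by blast
  define b where "b i = x i - (\<Sum>j\<in>{1..n}. W i j * x j)" for i
  have "\<forall>i\<in>{1..n}. b i \<ge> 0" using h by (simp add: b_def)
  moreover have "tln_fixed_point n W b x"
    unfolding tln_fixed_point_def b_def using x0 by auto
  ultimately show "s \<in> comb_code n E W" unfolding comb_code_def using s x0 by blast
qed

theorem mainTheorem3:
  fixes W W' :: "nat \<Rightarrow> nat \<Rightarrow> real" and m k n :: nat
  assumes "k \<ge> 1" and "n = m + k"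
    and "dale_matrix n {1..m} W"
    and "ground_assumption n W"
    and "dale_matrix (m + 1) {1..m} W'"
    and "\<forall>i\<in>{1..m}. \<forall>j\<in>{1..m}. W' i j = W i j"
    and "\<forall>i\<in>{1..m}. W' i (m + 1) < 0 \<longleftrightarrow> (\<exists>j\<in>{m+1..n}. W i j \<noteq> 0)"
    and "\<forall>j\<in>{1..m+1}. W' (m + 1) j = 0"
    and "ground_assumption (m + 1) W'"
  shows "comb_code n {1..m} W = comb_code (m + 1) {1..m} W'"
proof -
  note n = assms(2)
  have Wneg: "W i j \<le> 0" if "i \<in> {1..n}" "j \<in> {m+1..n}" for i j
    using assms(3) that n unfolding dale_matrix_def by auto
  have W'neg: "W' i (m+1) \<le> 0" if "i \<in> {1..m+1}" for i
    using assms(5) that unfolding dale_matrix_def by auto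
  have split: "(\<Sum>j\<in>{1..n}. f j) = (\<Sum>j\<in>{1..m}. f j) + (\<Sum>j\<in>{m+1..n}. f j)"
    for f :: "nat \<Rightarrow> real"
  proof -
    have "{1..n} = {1..m} \<union> {m+1..n}" using n by auto
    then show ?thesis by (simp add: sum.union_disjoint)
  qed
  have split': "(\<Sum>j\<in>{1..m+1}. f j) = (\<Sum>j\<in>{1..m}. f j) + f (m+1)"
    for f :: "nat \<Rightarrow> real" by simp
  have Aeq: "(\<Sum>j\<in>{1..m}. W' i j * y j) = (\<Sum>j\<in>{1..m}. W i j * y j)"
    if "i \<in> {1..m}" for i and y :: "nat \<Rightarrow> real"
    using assms(6) that by (intro sum.cong) auto
  show ?thesis
    unfolding code_char
  proof (intro subset_antisym subsetI)
    fix s assume "s \<in> {supp_plus {1..m} x | x. (\<forall>i\<in>{1..n}. x i \<ge> 0) \<and>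
      (\<forall>i\<in>{1..n}. (\<Sum>j\<in>{1..n}. W i j * x j) \<le> x i)}"
    then obtain x where s: "s = supp_plus {1..m} x" and x0: "\<forall>i\<in>{1..n}. x i \<ge> 0"
      and h: "\<forall>i\<in>{1..n}. (\<Sum>j\<in>{1..n}. W i j * x j) \<le> x i" by blast
    define d where "d i = (\<Sum>j\<in>{1..m}. W i j * x j) - x i" for i
    define L where "L = (\<Sum>i\<in>{1..m}. \<bar>d i\<bar> / \<bar>W' i (m+1)\<bar>)"
    define y where "y i = (if i \<le> m then x i else L)" for i
    have L0: "L \<ge> 0" unfolding L_def by (intro sum_nonneg) auto
    have Lge: "\<bar>d i\<bar> / \<bar>W' i (m+1)\<bar> \<le> L" if "i \<in> {1..m}" for i
      unfolding L_def using that by (intro member_le_sum) auto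
    have "supp_plus {1..m} y = s" unfolding s supp_plus_def y_def by auto
    moreover have "\<forall>i\<in>{1..m+1}. y i \<ge> 0" using x0 L0 n unfolding y_def by auto
    moreover have "\<forall>i\<in>{1..m+1}. (\<Sum>j\<in>{1..m+1}. W' i j * y j) \<le> y i"
    proof
      fix i assume i: "i \<in> {1..m+1}"
      show "(\<Sum>j\<in>{1..m+1}. W' i j * y j) \<le> y i"
      proof (cases "i = m+1")
        case True
        then have "(\<Sum>j\<in>{1..m+1}. W' i j * y j) = 0" using assms(8) by simp
        then show ?thesis using True L0 y_def by simp
      next
        case False
        then have im: "i \<in> {1..m}" using i by auto
        have yx: "(\<Sum>j\<in>{1..m}. W' i j * y j) = (\<Sum>j\<in>{1..m}. W i j * x j)"
          unfolding Aeq[OF im] y_def by (intro sum.cong) auto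
        have hi: "(\<Sum>j\<in>{1..m}. W i j * x j) + (\<Sum>j\<in>{m+1..n}. W i j * x j) \<le> x i"
          using h im n split by auto
        have "(\<Sum>j\<in>{1..m}. W i j * x j) + W' i (m+1) * L \<le> x i"
        proof (cases "W' i (m+1) < 0")
          case True
          have "W' i (m+1) * L \<le> W' i (m+1) * (\<bar>d i\<bar> / \<bar>W' i (m+1)\<bar>)"
            using Lge[OF im] True by (intro mult_left_mono_neg) auto
          also have "\<dots> = - \<bar>d i\<bar>" using True by (simp add: abs_if)
          finally show ?thesis unfolding d_def by linarith
        next
          case False
          then have "W' i (m+1) = 0" using W'neg i by force
          moreover have "\<forall>j\<in>{m+1..n}. W i j = 0" using False assms(7) im by blast
          ultimately show ?thesis using hi by simp
        qed
        then show ?thesis using yx im y_def by (simp add: split')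
      qed
    qed
    ultimately show "s \<in> {supp_plus {1..m} x | x. (\<forall>i\<in>{1..m+1}. x i \<ge> 0) \<and>
      (\<forall>i\<in>{1..m+1}. (\<Sum>j\<in>{1..m+1}. W' i j * x j) \<le> x i)}" by blast
  next
    fix s assume "s \<in> {supp_plus {1..m} x | x. (\<forall>i\<in>{1..m+1}. x i \<ge> 0) \<and>
      (\<forall>i\<in>{1..m+1}. (\<Sum>j\<in>{1..m+1}. W' i j * x j) \<le> x i)}"
    then obtain y where s: "s = supp_plus {1..m} y" and y0: "\<forall>i\<in>{1..m+1}. y i \<ge> 0"
      and h: "\<forall>i\<in>{1..m+1}. (\<Sum>j\<in>{1..m+1}. W' i j * y j) \<le> y i" by blast
    define sm where "sm i = (\<Sum>j\<in>{m+1..n}. W i j)" for i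
    define d where "d i = (\<Sum>j\<in>{1..m}. W i j * y j) - y i" for i
    define L where "L = (\<Sum>i\<in>{1..m}. \<bar>d i\<bar> / \<bar>sm i\<bar>)
       + (\<Sum>l\<in>{m+1..n}. \<bar>\<Sum>j\<in>{1..m}. W l j * y j\<bar>)"
    define x where "x i = (if i \<le> m then y i else L)" for i
    have L1: "(\<Sum>i\<in>{1..m}. \<bar>d i\<bar> / \<bar>sm i\<bar>) \<ge> 0" by (intro sum_nonneg) auto
    have L2: "(\<Sum>l\<in>{m+1..n}. \<bar>\<Sum>j\<in>{1..m}. W l j * y j\<bar>) \<ge> 0" by (intro sum_nonneg) auto
    have L0: "L \<ge> 0" using L1 L2 L_def by simp
    have Lge: "\<bar>d i\<bar> / \<bar>sm i\<bar> \<le> L" if "i \<in> {1..m}" for i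
    proof -
      have "\<bar>d i\<bar> / \<bar>sm i\<bar> \<le> (\<Sum>i\<in>{1..m}. \<bar>d i\<bar> / \<bar>sm i\<bar>)"
        using that by (intro member_le_sum) auto
      then show ?thesis using L2 unfolding L_def by linarith
    qed
    have Lge2: "\<bar>\<Sum>j\<in>{1..m}. W l j * y j\<bar> \<le> L" if "l \<in> {m+1..n}" for l
    proof -
      have "\<bar>\<Sum>j\<in>{1..m}. W l j * y j\<bar> \<le> (\<Sum>l\<in>{m+1..n}. \<bar>\<Sum>j\<in>{1..m}. W l j * y j\<bar>)"
        using that by (intro member_le_sum) auto
      then show ?thesis using L1 unfolding L_def by linarith
    qed
    have smneg: "sm i \<le> 0" if "i \<in> {1..n}" for i
      unfolding sm_def using Wneg that by (intro sum_nonpos) auto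
    have rowx: "(\<Sum>j\<in>{1..n}. W i j * x j) = (\<Sum>j\<in>{1..m}. W i j * y j) + sm i * L" for i
    proof -
      have "(\<Sum>j\<in>{1..m}. W i j * x j) = (\<Sum>j\<in>{1..m}. W i j * y j)"
        unfolding x_def by (intro sum.cong) auto
      moreover have "(\<Sum>j\<in>{m+1..n}. W i j * x j) = (\<Sum>j\<in>{m+1..n}. W i j * L)"
        unfolding x_def by (intro sum.cong) auto
      ultimately show ?thesis unfolding split sm_def by (simp add: sum_distrib_right)
    qed
    have "supp_plus {1..m} x = s" unfolding s supp_plus_def x_def by auto
    moreover have "\<forall>i\<in>{1..n}. x i \<ge> 0" using y0 L0 unfolding x_def by auto
    moreover have "\<forall>i\<in>{1..n}. (\<Sum>j\<in>{1..n}. W i j * x j) \<le> x i"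
    proof
      fix i assume i: "i \<in> {1..n}"
      show "(\<Sum>j\<in>{1..n}. W i j * x j) \<le> x i"
      proof (cases "i \<le> m")
        case False
        then have il: "i \<in> {m+1..n}" using i by auto
        have "sm i * L \<le> 0" using smneg[OF i] L0 by (simp add: mult_nonpos_nonneg)
        then show ?thesis unfolding rowx using Lge2[OF il] False x_def by simp
      next
        case True
        then have im: "i \<in> {1..m}" using i by auto
        have hi: "(\<Sum>j\<in>{1..m}. W i j * y j) + W' i (m+1) * y (m+1) \<le> y i"
        proof -
          have "(\<Sum>j\<in>{1..m+1}. W' i j * y j) \<le> y i" using h im by auto
          then show ?thesis using Aeq[OF im, of y] by (simp add: split')
        qed
        have "(\<Sum>j\<in>{1..m}. W i j * y j) + sm i * L \<le> y i"
        proof (cases "W' i (m+1) < 0")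
          case True
          then obtain j0 where j0: "j0 \<in> {m+1..n}" "W i j0 \<noteq> 0" using assms(7) im by blast
          have "W i j0 < 0" using Wneg[OF i j0(1)] j0(2) by simp
          moreover have "sm i \<le> W i j0"
          proof -
            have "sm i = W i j0 + (\<Sum>j\<in>{m+1..n} - {j0}. W i j)"
              unfolding sm_def using j0(1) by (simp add: sum.remove)
            moreover have "(\<Sum>j\<in>{m+1..n} - {j0}. W i j) \<le> 0"
              using Wneg[OF i] by (intro sum_nonpos) auto
            ultimately show ?thesis by simp
          qed
          ultimately have smn: "sm i < 0" by simp
          have "sm i * L \<le> sm i * (\<bar>d i\<bar> / \<bar>sm i\<bar>)"
            using Lge[OF im] smn by (intro mult_left_mono_neg) auto
          also have "\<dots> = - \<bar>d i\<bar>" using smn by (simp add: abs_if)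
          finally show ?thesis unfolding d_def by linarith
        next
          case False
          then have "W' i (m+1) = 0" using W'neg im by force
          moreover have "sm i * L \<le> 0" using smneg[OF i] L0 by (simp add: mult_nonpos_nonneg)
          ultimately show ?thesis using hi by simp
        qed
        then show ?thesis unfolding rowx using True x_def by simp
      qed
    qed
    ultimately show "s \<in> {supp_plus {1..m} x | x. (\<forall>i\<in>{1..n}. x i \<ge> 0) \<and>
      (\<forall>i\<in>{1..n}. (\<Sum>j\<in>{1..n}. W i j * x j) \<le> x i)}" by blast
  qed
qed

end
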